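(* For each $\kappa>0$ there exists a constant $D_{\min}(\kappa)$ such that for all $D<D_{\min}(\kappa)$ (with $D>0$) one has $\inf_{\varphi\in W^{1,2}(\mathbb{T})}\mathcal J(\varphi)<-\kappa^2/2$.
   Context: $\mathbb{T}=[0,1]$ with endpoints identified; $D>0,\kappa>0$; $$\mathcal J(u)=\frac D2\int_0^1|u_x|^2dx+\frac12\int_0^1u^2dx-\kappa\log\Big(\int_0^1e^udx\Big),\qquad u\in W^{1,2}(\mathbb{T}).$$ Note that $\mathcal J(\kappa)=-\kappa^2/2$ for the constant function $\kappa$. *)

theory Defs
  imports "HOL-Analysis.Analysis"
begin

text \<open>The torus T = [0,1] with endpoints identified. A function u on T is represented
by its values on [0,1] with u 0 = u 1. u belongs to W^{1,2}(T) iff it is absolutely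
continuous with a weak derivative g in L^2(0,1): u t = u 0 + int_0^t g for t in [0,1],
together with the periodicity u 1 = u 0.\<close>

definition is_weak_deriv_T :: "(real \<Rightarrow> real) \<Rightarrow> (real \<Rightarrow> real) \<Rightarrow> bool" where
  "is_weak_deriv_T u g \<longleftrightarrow>
     g \<in> borel_measurable lborel \<and>
     set_integrable lborel {0..1} g \<and>
     set_integrable lborel {0..1} (\<lambda>x. (g x)\<^sup>2) \<and>
     (\<forall>t\<in>{0..1}. u t = u 0 + (LBINT x:{0..t}. g x)) \<and>
     u 1 = u 0"

definition W12_torus :: "(real \<Rightarrow> real) set" where
  "W12_torus = {u. \<exists>g. is_weak_deriv_T u g}"

definition weak_deriv_T :: "(real \<Rightarrow> real) \<Rightarrow> (real \<Rightarrow> real)" where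
  "weak_deriv_T u = (SOME g. is_weak_deriv_T u g)"

definition J_functional :: "real \<Rightarrow> real \<Rightarrow> (real \<Rightarrow> real) \<Rightarrow> real" where
  "J_functional D \<kappa> u =
     D / 2 * (LBINT x:{0..1}. (weak_deriv_T u x)\<^sup>2)
     + 1 / 2 * (LBINT x:{0..1}. (u x)\<^sup>2)
     - \<kappa> * ln (LBINT x:{0..1}. exp (u x))"

end

theory Submission
  imports Defs
begin


lemma emeasure_density_real:
  fixes f :: "real \<Rightarrow> real"
  assumes f: "integrable lborel f" "\<And>x. f x \<ge> 0" and A: "A \<in> sets borel"
  shows "emeasure (density lborel (\<lambda>x. ennreal (f x))) A = ennreal (set_lebesgue_integral lborel A f)"
proof -
  have fm[measurable]: "f \<in> borel_measurable borel" using f(1) by auto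
  have "emeasure (density lborel (\<lambda>x. ennreal (f x))) A = (\<integral>\<^sup>+ x. ennreal (f x) * indicator A x \<partial>lborel)"
    by (rule emeasure_density) (use A in auto)
  also have "\<dots> = (\<integral>\<^sup>+ x. ennreal (indicator A x * f x) \<partial>lborel)"
    by (intro nn_integral_cong) (auto simp: indicator_def)
  also have "\<dots> = ennreal (\<integral>x. indicator A x * f x \<partial>lborel)"
    apply (rule nn_integral_eq_integral)
    using f A integrable_mult_indicator[of A lborel f] by (auto simp: indicator_def)
  finally show ?thesis by (simp add: set_lebesgue_integral_def)
qed

lemma primitive_zero_ae:
  fixes h :: "real \<Rightarrow> real"
  assumes hi: "set_integrable lborel {0..1} h"
    and h0: "\<And>t. t \<in> {0..1} \<Longrightarrow> (LBINT x:{0..t}. h x) = 0"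
  shows "AE x in lborel. x \<in> {0..1} \<longrightarrow> h x = 0"
proof -
  define P where "P x = max (indicator {0..1} x * h x) 0" for x :: real
  define Q where "Q x = max (- (indicator {0..1} x * h x)) 0" for x :: real
  have hI: "integrable lborel (\<lambda>x. indicator {0..1} x * h x)"
    using hi by (simp add: set_integrable_def)
  have PI: "integrable lborel P" unfolding P_def using hI by auto
  have QI: "integrable lborel Q" unfolding Q_def using hI by auto
  have PQ: "P x - Q x = indicator {0..1} x * h x" for x unfolding P_def Q_def by auto
  have Pnn: "P x \<ge> 0" for x unfolding P_def by auto
  have Qnn: "Q x \<ge> 0" for x unfolding Q_def by auto
  have diff: "set_lebesgue_integral lborel A P - set_lebesgue_integral lborel A Q
      = (LBINT x:A \<inter> {0..1}. h x)" if A: "A \<in> sets borel" for A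
  proof -
    have "set_lebesgue_integral lborel A P - set_lebesgue_integral lborel A Q
        = (LBINT x:A. P x - Q x)"
      apply (rule set_integral_diff(2)[symmetric])
      using A PI QI integrable_mult_indicator[of A lborel P] integrable_mult_indicator[of A lborel Q]
      by (auto simp: set_integrable_def)
    also have "\<dots> = (LBINT x:A \<inter> {0..1}. h x)"
      unfolding PQ set_lebesgue_integral_def
      by (intro Bochner_Integration.integral_cong) (auto simp: indicator_def)
    finally show ?thesis .
  qed
  have zero: "(LBINT x:{x<..} \<inter> {0..1}. h x) = 0" for x :: real
  proof (cases "x < 0")
    case True
    then have "{x<..} \<inter> {0..1} = {0..1::real}" by auto
    then show ?thesis using h0[of 1] by simp
  next
    case False
    show ?thesis
    proof (cases "x < 1")
      case True
      have e: "{0..1} = {0..x} \<union> ({x<..} \<inter> {0..1::real})" using False True by auto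
      have "(LBINT y:{0..1}. h y) = (LBINT y:{0..x}. h y) + (LBINT y:{x<..} \<inter> {0..1}. h y)"
        apply (subst e)
        apply (rule set_integral_Un)
        using False True by (auto intro!: set_integrable_subset[OF hi])
      then show ?thesis using h0[of 1] h0[of x] False True by simp
    next
      case False2: False
      then have "{x<..} \<inter> {0..1} = ({}::real set)" by auto
      then show ?thesis by (simp add: set_lebesgue_integral_def)
    qed
  qed
  have "density lborel (\<lambda>x. ennreal (P x)) = density lborel (\<lambda>x. ennreal (Q x))"
  proof (rule measure_eqI_lessThan)
    fix x :: real
    show "emeasure (density lborel (\<lambda>x. ennreal (P x))) {x<..} < \<infinity>"
      using emeasure_density_real[OF PI Pnn, of "{x<..}"] by simp
    have "set_lebesgue_integral lborel {x<..} P = set_lebesgue_integral lborel {x<..} Q"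
      using diff[of "{x<..}"] zero[of x] by simp
    then show "emeasure (density lborel (\<lambda>x. ennreal (P x))) {x<..}
        = emeasure (density lborel (\<lambda>x. ennreal (Q x))) {x<..}"
      using emeasure_density_real[OF PI Pnn, of "{x<..}"] emeasure_density_real[OF QI Qnn, of "{x<..}"]
      by simp
  qed auto
  then have "set_lebesgue_integral lborel A P = set_lebesgue_integral lborel A Q"
    if "A \<in> sets lborel" for A
  proof -
    assume eq: "density lborel (\<lambda>x. ennreal (P x)) = density lborel (\<lambda>x. ennreal (Q x))"
    have "ennreal (set_lebesgue_integral lborel A P) = ennreal (set_lebesgue_integral lborel A Q)"
      using emeasure_density_real[OF PI Pnn, of A] emeasure_density_real[OF QI Qnn, of A] eq that
      by simp
    moreover have "set_lebesgue_integral lborel A P \<ge> 0" "set_lebesgue_integral lborel A Q \<ge> 0"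
      using Pnn Qnn by (auto simp: set_lebesgue_integral_def intro!: Bochner_Integration.integral_nonneg)
    ultimately show ?thesis by simp
  qed
  then have "AE x in lborel. P x = Q x"
    by (intro density_unique_real PI QI) auto
  then show ?thesis
    by eventually_elim (auto simp: P_def Q_def indicator_def split: if_splits)
qed



definition phiT :: "real \<Rightarrow> real \<Rightarrow> real \<Rightarrow> real" where
  "phiT A p x = min A ((A/p) * max 0 (2*p - \<bar>x - 1/2\<bar>))"

definition gT :: "real \<Rightarrow> real \<Rightarrow> real \<Rightarrow> real" where
  "gT A p x = (if 1/2 - 2*p < x \<and> x < 1/2 - p then A/p
     else if 1/2 + p < x \<and> x < 1/2 + 2*p then - (A/p) else 0)"

lemma phiT_cont: "continuous_on S (phiT A p)"
  unfolding phiT_def by (intro continuous_intros)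

lemma phiT_deriv:
  assumes A: "A > 0" and p: "p > 0"
    and x: "x \<notin> {1/2 - 2*p, 1/2 - p, 1/2 + p, 1/2 + 2*p}"
  shows "(phiT A p has_real_derivative gT A p x) (at x)"
proof -
  have L: "(A/p) * p = A" using p by simp
  consider "x < 1/2 - 2*p" | "1/2 - 2*p < x \<and> x < 1/2 - p" | "1/2 - p < x \<and> x < 1/2 + p"
    | "1/2 + p < x \<and> x < 1/2 + 2*p" | "1/2 + 2*p < x" using x by fastforce
  then show ?thesis
  proof cases
    case 1
    show ?thesis
    proof (rule has_field_derivative_transform_within_open[of "\<lambda>_. 0" _ _ "{..<1/2-2*p}"])
      show "((\<lambda>_. 0) has_real_derivative gT A p x) (at x)" using 1 p by (simp add: gT_def)
      show "\<And>y. y \<in> {..<1/2-2*p} \<Longrightarrow> 0 = phiT A p y" using p A by (auto simp: phiT_def)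
    qed (use 1 in auto)
  next
    case 2
    have d: "((\<lambda>y. (A/p) * (y - (1/2 - 2*p))) has_real_derivative (A/p)) (at x)"
      using p by (auto intro!: derivative_eq_intros)
    have ge: "gT A p x = A/p" using 2 p by (simp add: gT_def)
    have ag: "\<And>y. y \<in> {1/2-2*p<..<1/2-p} \<Longrightarrow> (A/p) * (y - (1/2 - 2*p)) = phiT A p y"
    proof -
      fix y assume y: "y \<in> {1/2-2*p<..<1/2-p}"
      have e1: "2*p - \<bar>y - 1/2\<bar> = y - (1/2 - 2*p)" using y by (auto simp: abs_if)
      have e2: "0 < y - (1/2 - 2*p)" "y - (1/2 - 2*p) < p" using y by auto
      have "(A/p) * (y - (1/2 - 2*p)) < (A/p) * p" using e2 A p by (intro mult_strict_left_mono) auto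
      also have "(A/p) * p = A" using p by simp
      finally show "(A/p) * (y - (1/2 - 2*p)) = phiT A p y"
        unfolding phiT_def e1 using e2 by (simp add: min_def max_def)
    qed
    show ?thesis unfolding ge
      by (rule has_field_derivative_transform_within_open[where S="{1/2-2*p<..<1/2-p}", OF d _ _ ag]) (use 2 in auto)
  next
    case 3
    have "gT A p x = 0" using 3 by (simp add: gT_def)
    then show ?thesis
      apply simp
      apply (rule has_field_derivative_transform_within_open[of "\<lambda>_. A" _ _ "{1/2-p<..<1/2+p}"])
      using 3 p A by (auto simp: phiT_def min_def max_def abs_if field_simps)
  next
    case 4
    have d: "((\<lambda>y. (A/p) * ((1/2 + 2*p) - y)) has_real_derivative (- (A/p))) (at x)"
      using p by (auto intro!: derivative_eq_intros)
    have ge: "gT A p x = - (A/p)" using 4 p by (simp add: gT_def)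
    have ag: "\<And>y. y \<in> {1/2+p<..<1/2+2*p} \<Longrightarrow> (A/p) * ((1/2 + 2*p) - y) = phiT A p y"
    proof -
      fix y assume y: "y \<in> {1/2+p<..<1/2+2*p}"
      have e1: "2*p - \<bar>y - 1/2\<bar> = (1/2 + 2*p) - y" using y by (auto simp: abs_if)
      have e2: "0 < (1/2 + 2*p) - y" "(1/2 + 2*p) - y < p" using y by auto
      have "(A/p) * ((1/2 + 2*p) - y) < (A/p) * p" using e2 A p by (intro mult_strict_left_mono) auto
      also have "(A/p) * p = A" using p by simp
      finally show "(A/p) * ((1/2 + 2*p) - y) = phiT A p y"
        unfolding phiT_def e1 using e2 by (simp add: min_def max_def)
    qed
    show ?thesis unfolding ge
      by (rule has_field_derivative_transform_within_open[where S="{1/2+p<..<1/2+2*p}", OF d _ _ ag]) (use 4 in auto)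
  next
    case 5
    have "gT A p x = 0" using 5 p by (simp add: gT_def)
    then show ?thesis
      apply simp
      apply (rule has_field_derivative_transform_within_open[of "\<lambda>_. 0" _ _ "{1/2+2*p<..}"])
      using 5 p A by (auto simp: phiT_def)
  qed
qed

lemma gT_meas[measurable]: "gT A p \<in> borel_measurable borel"
  unfolding gT_def by measurable

lemma gT_bound: assumes "A > 0" "p > 0" shows "\<bar>gT A p x\<bar> \<le> A/p"
  using assms by (simp add: gT_def)

lemma gT_int: assumes "A > 0" "p > 0" shows "set_integrable lborel {0..1} (gT A p)"
  by (rule set_integrable_bound[of lborel "{0..1}" "\<lambda>_. A/p"])
     (use assms gT_bound[OF assms] in \<open>auto intro!: borel_integrable_atLeastAtMost' simp: set_borel_measurable_def\<close>)

lemma gT_int2: assumes "A > 0" "p > 0" shows "set_integrable lborel {0..1} (\<lambda>x. (gT A p x)\<^sup>2)"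
proof (rule set_integrable_bound[of lborel "{0..1}" "\<lambda>_. (A/p)\<^sup>2"])
  show "set_integrable lborel {0..1::real} (\<lambda>_. (A/p)\<^sup>2)"
    using borel_integrable_atLeastAtMost'[of 0 1 "\<lambda>_. (A/p)\<^sup>2"] by simp
  show "set_borel_measurable lborel {0..1} (\<lambda>x. (gT A p x)\<^sup>2)"
    by (simp add: set_borel_measurable_def)
  have "(gT A p x)\<^sup>2 \<le> (A/p)\<^sup>2" for x
    using gT_bound[OF assms, of x] by (metis abs_le_square_iff abs_of_pos assms divide_pos_pos)
  then show "AE x in lborel. x \<in> {0..1} \<longrightarrow> norm ((gT A p x)\<^sup>2) \<le> norm ((A/p)\<^sup>2)"
    by auto
qed

lemma phiT_ends: assumes "A > 0" "p > 0" "4*p \<le> 1" shows "phiT A p 0 = 0" "phiT A p 1 = 0"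
  using assms by (auto simp: phiT_def)

lemma phiT_W12:
  assumes A: "A > 0" and p: "p > 0" "4*p \<le> 1"
  shows "is_weak_deriv_T (phiT A p) (gT A p)"
  unfolding is_weak_deriv_T_def
proof (intro conjI ballI)
  show "gT A p \<in> borel_measurable lborel" by simp
  show "set_integrable lborel {0..1} (gT A p)" by (rule gT_int[OF A p(1)])
  show "set_integrable lborel {0..1} (\<lambda>x. (gT A p x)\<^sup>2)" by (rule gT_int2[OF A p(1)])
  show "phiT A p 1 = phiT A p 0" using phiT_ends[OF A p] by simp
  fix t :: real assume t: "t \<in> {0..1}"
  have "(gT A p has_integral (phiT A p t - phiT A p 0)) {0..t}"
  proof (rule fundamental_theorem_of_calculus_interior_strong[of "{1/2 - 2*p, 1/2 - p, 1/2 + p, 1/2 + 2*p}"])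
    show "continuous_on {0..t} (phiT A p)" by (rule phiT_cont)
    fix x assume "x \<in> {0<..<t} - {1/2 - 2*p, 1/2 - p, 1/2 + p, 1/2 + 2*p}"
    then show "(phiT A p has_vector_derivative gT A p x) (at x)"
      using phiT_deriv[OF A p(1), of x] by (simp add: has_real_derivative_iff_has_vector_derivative)
  qed (use t in auto)
  moreover have "set_integrable lborel {0..t} (gT A p)"
    by (rule set_integrable_subset[OF gT_int[OF A p(1)]]) (use t in auto)
  ultimately have "(LBINT x:{0..t}. gT A p x) = phiT A p t - phiT A p 0"
    using set_borel_integral_eq_integral(2) integral_unique by metis
  then show "phiT A p t = phiT A p 0 + (LBINT x:{0..t}. gT A p x)" by simp
qed

lemma phiT_range: assumes "A > 0" "p > 0" shows "0 \<le> phiT A p x" "phiT A p x \<le> A"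
  using assms by (auto simp: phiT_def)

lemma phiT_zero: assumes "A > 0" "p > 0" "\<bar>x - 1/2\<bar> \<ge> 2*p" shows "phiT A p x = 0"
  using assms by (auto simp: phiT_def)

lemma phiT_top: assumes "A > 0" "p > 0" "\<bar>x - 1/2\<bar> \<le> p" shows "phiT A p x = A"
proof -
  have "p \<le> 2*p - \<bar>x - 1/2\<bar>" using assms by auto
  then have "(A/p) * p \<le> (A/p) * (2*p - \<bar>x - 1/2\<bar>)" using assms by (intro mult_left_mono) auto
  moreover have "(A/p) * p = A" using assms by simp
  ultimately have "A \<le> (A/p) * max 0 (2*p - \<bar>x - 1/2\<bar>)" using assms by (simp add: max_def)
  then show ?thesis unfolding phiT_def by simp
qed

lemma LBINT_cont_eq:
  fixes f :: "real \<Rightarrow> real"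
  assumes "continuous_on {a..b} f"
  shows "(LBINT x:{a..b}. f x) = integral {a..b} f"
  using set_borel_integral_eq_integral(2)[OF borel_integrable_atLeastAtMost'[OF assms]] .

lemma split3:
  fixes f :: "real \<Rightarrow> real"
  assumes "continuous_on {0..1} f" "0 \<le> a" "a \<le> b" "b \<le> 1"
  shows "integral {0..1} f = integral {0..a} f + integral {a..b} f + integral {b..1} f"
proof -
  have i: "f integrable_on {0..1}" by (rule integrable_continuous_interval[OF assms(1)])
  have i2: "f integrable_on {a..1}"
    by (rule integrable_subinterval_real[OF i]) (use assms in auto)
  have "integral {0..1} f = integral {0..a} f + integral {a..1} f"
    using Henstock_Kurzweil_Integration.integral_combine[OF _ _ i, of a] assms by simp
  moreover have "integral {a..1} f = integral {a..b} f + integral {b..1} f"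
    using Henstock_Kurzweil_Integration.integral_combine[OF _ _ i2, of b] assms by simp
  ultimately show ?thesis by simp
qed

lemma phiT_sq:
  assumes A: "A > 0" and p: "p > 0" "4*p \<le> 1"
  shows "(LBINT x:{0..1}. (phiT A p x)\<^sup>2) \<le> 4*p*A\<^sup>2"
proof -
  let ?f = "\<lambda>x. (phiT A p x)\<^sup>2"
  have c: "continuous_on S ?f" for S by (intro continuous_intros phiT_cont)
  define a where "a = 1/2 - 2*p"
  define b where "b = 1/2 + 2*p"
  have ab: "0 \<le> a" "a \<le> b" "b \<le> 1" using p by (auto simp: a_def b_def)
  have "(LBINT x:{0..1}. ?f x) = integral {0..1} ?f" by (rule LBINT_cont_eq[OF c])
  also have "\<dots> = integral {0..a} ?f + integral {a..b} ?f + integral {b..1} ?f"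
    by (rule split3[OF c ab])
  also have "integral {0..a} ?f = integral {0..a} (\<lambda>_. 0)"
    by (rule integral_cong) (use A p in \<open>auto simp: a_def intro!: phiT_zero\<close>)
  also have "integral {b..1} ?f = integral {b..1} (\<lambda>_. 0)"
    by (rule integral_cong) (use A p in \<open>auto simp: b_def intro!: phiT_zero\<close>)
  also have "integral {a..b} ?f \<le> integral {a..b} (\<lambda>_. A\<^sup>2)"
  proof (rule integral_le)
    show "?f integrable_on {a..b}" by (rule integrable_continuous_interval[OF c])
    show "(\<lambda>_. A\<^sup>2) integrable_on {a..b}" by (intro integrable_continuous_interval continuous_on_const)
    fix x show "?f x \<le> A\<^sup>2" using phiT_range[OF A p(1), of x]
      by (intro power_mono) auto
  qed
  finally show ?thesis using ab by (simp add: a_def b_def algebra_simps)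
qed

lemma phiT_exp:
  assumes A: "A > 0" and p: "p > 0" "4*p \<le> 1"
  shows "(LBINT x:{0..1}. exp (phiT A p x)) \<ge> 1 - 2*p + 2*p*exp A"
proof -
  let ?f = "\<lambda>x. exp (phiT A p x)"
  have c: "continuous_on S ?f" for S by (intro continuous_intros phiT_cont)
  define a where "a = 1/2 - p"
  define b where "b = 1/2 + p"
  have ab: "0 \<le> a" "a \<le> b" "b \<le> 1" using p by (auto simp: a_def b_def)
  have ge1: "integral {u..v} (\<lambda>_. 1) \<le> integral {u..v} ?f" for u v
  proof (rule integral_le)
    show "?f integrable_on {u..v}" by (rule integrable_continuous_interval[OF c])
    fix x show "1 \<le> ?f x" using phiT_range[OF A p(1), of x] by simp
  qed (intro integrable_continuous_interval continuous_on_const)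
  have "integral {a..b} ?f = integral {a..b} (\<lambda>_. exp A)"
    by (rule integral_cong) (use A p in \<open>auto simp: a_def b_def intro!: phiT_top\<close>)
  then have "1 - 2*p + 2*p*exp A = integral {0..a} (\<lambda>_. 1) + integral {a..b} ?f + integral {b..1} (\<lambda>_. 1)"
    using ab by (simp add: a_def b_def algebra_simps)
  also have "\<dots> \<le> integral {0..a} ?f + integral {a..b} ?f + integral {b..1} ?f"
    using ge1[of 0 a] ge1[of b 1] by simp
  also have "\<dots> = integral {0..1} ?f" by (rule split3[OF c ab, symmetric])
  also have "\<dots> = (LBINT x:{0..1}. ?f x)" by (rule LBINT_cont_eq[OF c, symmetric])
  finally show ?thesis .
qed


lemma lin_aux: "(u::real) < 1 \<Longrightarrow> (y::real) \<le> 16 \<Longrightarrow> ((q::real) + 17)/2 \<le> w \<Longrightarrow> u/2 + 1/2*y - w < -(q/2)"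
  by (simp add: field_simps)

theorem mainTheorem4:
  fixes \<kappa> :: real
  assumes "\<kappa> > 0"
  shows "\<exists>Dmin > 0. \<forall>D. 0 < D \<and> D < Dmin \<longrightarrow>
           (\<exists>\<phi>\<in>W12_torus. J_functional D \<kappa> \<phi> < - (\<kappa>\<^sup>2 / 2))"
proof -
  have k: "\<kappa> > 0" by fact
  define A where "A = \<kappa> + 17/\<kappa>"
  have A0: "A > 0" using k by (simp add: A_def add_pos_pos)
  have "0 \<le> (\<kappa> - 1)\<^sup>2" by simp
  then have "2*\<kappa> \<le> \<kappa>*\<kappa> + 17" by (simp add: power2_eq_square algebra_simps)
  then have A2: "A \<ge> 2" using k by (simp add: A_def field_simps)
  have kA: "\<kappa> * A = \<kappa>\<^sup>2 + 17" using k by (simp add: A_def field_simps power2_eq_square)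
  define p where "p = exp (-A/2) / 2"
  have p0: "p > 0" by (simp add: p_def)
  have eA: "exp (A/2) \<ge> 2" using exp_ge_add_one_self[of "A/2"] A2 by linarith
  have ee: "exp (-A/2) * exp (A/2) = 1" by (simp add: exp_minus field_simps)
  have p4: "4*p \<le> 1"
  proof -
    have "4*p = 2 / exp (A/2)" by (simp add: p_def exp_minus field_simps)
    then have "p * (2 * exp (A/2)) = 1" by (simp add: field_simps)
    moreover have "p * 4 \<le> p * (2 * exp (A/2))" using eA p0 by (intro mult_left_mono) auto
    ultimately show ?thesis by simp
  qed
  define L where "L = A/p"
  define Dmin where "Dmin = 1 / (L\<^sup>2 + 1)"
  have L1: "L\<^sup>2 + 1 > 0" by (metis add_pos_nonneg zero_le_power2 zero_less_one add.commute)
  have Dmin0: "Dmin > 0" using L1 by (simp add: Dmin_def)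
  let ?phi = "phiT A p"
  have W: "is_weak_deriv_T ?phi (gT A p)" by (rule phiT_W12[OF A0 p0 p4])
  then have phiW: "?phi \<in> W12_torus" by (auto simp: W12_torus_def)
  define g0 where "g0 = weak_deriv_T ?phi"
  have W0: "is_weak_deriv_T ?phi g0"
    unfolding g0_def weak_deriv_T_def using W by (rule someI[of "is_weak_deriv_T ?phi"])
  have g0m: "g0 \<in> borel_measurable lborel" and g0i: "set_integrable lborel {0..1} g0"
    and g0eq: "\<And>t. t \<in> {0..1} \<Longrightarrow> ?phi t = ?phi 0 + (LBINT x:{0..t}. g0 x)"
    using W0 unfolding is_weak_deriv_T_def by blast+
  have gi: "set_integrable lborel {0..1} (gT A p)"
    and geq: "\<And>t. t \<in> {0..1} \<Longrightarrow> ?phi t = ?phi 0 + (LBINT x:{0..t}. gT A p x)"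
    using W unfolding is_weak_deriv_T_def by blast+
  have "AE x in lborel. x \<in> {0..1} \<longrightarrow> g0 x - gT A p x = 0"
  proof (rule primitive_zero_ae)
    show "set_integrable lborel {0..1} (\<lambda>x. g0 x - gT A p x)"
      by (rule set_integral_diff(1)[OF g0i gi])
    fix t :: real assume t: "t \<in> {0..1}"
    have s: "{0..t} \<subseteq> {0..1}" using t by auto
    have "(LBINT x:{0..t}. g0 x - gT A p x) = (LBINT x:{0..t}. g0 x) - (LBINT x:{0..t}. gT A p x)"
      by (rule set_integral_diff(2)) (auto intro!: set_integrable_subset[OF g0i _ s] set_integrable_subset[OF gi _ s])
    then show "(LBINT x:{0..t}. g0 x - gT A p x) = 0" using g0eq[OF t] geq[OF t] by simp
  qed
  then have "AE x in lborel. x \<in> {0..1} \<longrightarrow> (g0 x)\<^sup>2 = (gT A p x)\<^sup>2" by eventually_elim auto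
  then have I0eq: "(LBINT x:{0..1}. (g0 x)\<^sup>2) = (LBINT x:{0..1}. (gT A p x)\<^sup>2)"
    by (intro set_lebesgue_integral_cong_AE) (use g0m in auto)
  have "(LBINT x:{0..1}. (gT A p x)\<^sup>2) \<le> (LBINT x:{0..1::real}. L\<^sup>2)"
  proof (rule set_integral_mono)
    show "set_integrable lborel {0..1} (\<lambda>x. (gT A p x)\<^sup>2)" by (rule gT_int2[OF A0 p0])
    show "set_integrable lborel {0..1::real} (\<lambda>x. L\<^sup>2)"
      using borel_integrable_atLeastAtMost'[of 0 1 "\<lambda>_. L\<^sup>2"] by simp
    fix x show "(gT A p x)\<^sup>2 \<le> L\<^sup>2"
      using gT_bound[OF A0 p0, of x] unfolding L_def
      by (metis abs_le_square_iff abs_of_pos A0 p0 divide_pos_pos)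
  qed
  also have "(LBINT x:{0..1::real}. L\<^sup>2) = L\<^sup>2"
    using LBINT_cont_eq[of 0 1 "\<lambda>_. L\<^sup>2"] by simp
  finally have I0: "(LBINT x:{0..1}. (weak_deriv_T ?phi x)\<^sup>2) \<le> L\<^sup>2"
    using I0eq by (simp add: g0_def)
  have I2: "(LBINT x:{0..1}. (?phi x)\<^sup>2) \<le> 16"
  proof -
    have q: "exp (A/2) \<ge> A\<^sup>2/8"
      using exp_lower_Taylor_quadratic[of "A/2"] A0 by (simp add: power2_eq_square field_simps)
    have "4*p*A\<^sup>2 = 2 * A\<^sup>2 / exp (A/2)" by (simp add: p_def exp_minus field_simps)
    also have "\<dots> \<le> 16" using q by (simp add: field_simps)
    finally show ?thesis using phiT_sq[OF A0 p0 p4] by linarith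
  qed
  have I1: "ln (LBINT x:{0..1}. exp (?phi x)) \<ge> A/2"
  proof -
    have "2*p*exp A = exp (A/2)"
      by (simp add: p_def exp_minus field_simps flip: exp_add)
    then have "exp (A/2) \<le> (LBINT x:{0..1}. exp (?phi x))"
      using phiT_exp[OF A0 p0 p4] p4 by linarith
    then have "ln (exp (A/2)) \<le> ln (LBINT x:{0..1}. exp (?phi x))"
      by (intro ln_mono) auto
    then show ?thesis by simp
  qed
  show ?thesis
  proof (intro exI[of _ Dmin] conjI allI impI Dmin0)
    fix D :: real assume D: "0 < D \<and> D < Dmin"
    have "D * L\<^sup>2 < 1"
    proof -
      have "D * (L\<^sup>2 + 1) < 1" using D L1 by (simp add: Dmin_def field_simps)
      then show ?thesis using D by (simp add: algebra_simps)
    qed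
    moreover have "D * (LBINT x:{0..1}. (weak_deriv_T ?phi x)\<^sup>2) \<le> D * L\<^sup>2"
      using I0 D by (intro mult_left_mono) auto
    moreover have "\<kappa> * (A/2) \<le> \<kappa> * ln (LBINT x:{0..1}. exp (?phi x))"
      using I1 k by (intro mult_left_mono) auto
    ultimately have "J_functional D \<kappa> ?phi < - (\<kappa>\<^sup>2 / 2)"
    proof -
      assume a1: "D * L\<^sup>2 < 1"
        and a2: "D * (LBINT x:{0..1}. (weak_deriv_T ?phi x)\<^sup>2) \<le> D * L\<^sup>2"
        and a3: "\<kappa> * (A/2) \<le> \<kappa> * ln (LBINT x:{0..1}. exp (?phi x))"
      have e1: "D / 2 * (LBINT x:{0..1}. (weak_deriv_T ?phi x)\<^sup>2) = (D * (LBINT x:{0..1}. (weak_deriv_T ?phi x)\<^sup>2)) / 2"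
        by simp
      have e2: "\<kappa> * (A/2) = (\<kappa>\<^sup>2 + 17) / 2" using kA by simp
      have u: "D * (LBINT x:{0..1}. (weak_deriv_T ?phi x)\<^sup>2) < 1" using a1 a2 by linarith
      have w: "(\<kappa>\<^sup>2 + 17) / 2 \<le> \<kappa> * ln (LBINT x:{0..1}. exp (?phi x))" using a3 e2 by linarith
      show ?thesis unfolding J_functional_def e1 by (rule lin_aux[OF u I2 w])
    qed
    then show "\<exists>\<phi>\<in>W12_torus. J_functional D \<kappa> \<phi> < - (\<kappa>\<^sup>2 / 2)" using phiW by blast
  qed
qed

end
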